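(* If $n\ge 1$, $k\ge 3$ and $t$ is a vertex of the $k$-Pell graph $\Pi_{n,k}$, then $$\deg(t)=|t|_0+2\sum_{i=1}^{k-1}|t|_i+\frac12|t|_k-r,$$ where $r$ is the number of maximal runs of the letter $k-1$ in $t$.
   Context: For an integer $k\ge 2$, a $k$-Pell string is a finite word over the alphabet $\{0,1,\ldots,k-1,kk\}$, i.e. a word over $\{0,1,\ldots,k\}$ in which every maximal run of the letter $k$ has even length. For $n\ge 0$, the $k$-Pell graph $\Pi_{n,k}$ has as vertices all $k$-Pell strings of length $n$, and two vertices are adjacent if one is obtained from the other either by replacing a single letter $i$ by $i+1$ (or vice versa) for some $i\in\{0,1,\ldots,k-2\}$, or by replacing one factor $(k-1)(k-1)$ by $kk$ (or vice versa), in such a way that the resulting string is again a $k$-Pell string. For a word $t$ and a letter $i$, $|t|_i$ denotes the number of occurrences of $i$ in $t$. *)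

theory Defs
  imports Complex_Main
begin

text \<open>k-Pell strings: words over the alphabet {0,...,k-1, kk}, encoded as nat lists
  (the block kk is the two letters k,k).\<close>
inductive pell_word :: "nat \<Rightarrow> nat list \<Rightarrow> bool" for k :: nat where
  Nil: "pell_word k []"
| Letter: "x < k \<Longrightarrow> pell_word k xs \<Longrightarrow> pell_word k (x # xs)"
| Block: "pell_word k xs \<Longrightarrow> pell_word k (k # k # xs)"

definition pell_vertices :: "nat \<Rightarrow> nat \<Rightarrow> nat list set" where
  "pell_vertices n k = {t. pell_word k t \<and> length t = n}"

definition pell_move :: "nat \<Rightarrow> nat list \<Rightarrow> nat list \<Rightarrow> bool" where
  "pell_move k u v \<longleftrightarrow>
     (\<exists>a b i j. u = a @ [i] @ b \<and> v = a @ [j] @ b \<and> i < k \<and> j < k \<and> (j = i + 1 \<or> i = j + 1))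
   \<or> (\<exists>a b. (u = a @ [k - 1, k - 1] @ b \<and> v = a @ [k, k] @ b)
          \<or> (u = a @ [k, k] @ b \<and> v = a @ [k - 1, k - 1] @ b))"

definition pell_adj :: "nat \<Rightarrow> nat \<Rightarrow> nat list \<Rightarrow> nat list \<Rightarrow> bool" where
  "pell_adj n k u v \<longleftrightarrow> u \<in> pell_vertices n k \<and> v \<in> pell_vertices n k \<and> pell_move k u v"

definition pell_degree :: "nat \<Rightarrow> nat \<Rightarrow> nat list \<Rightarrow> nat" where
  "pell_degree n k t = card {s. pell_adj n k t s}"

definition num_runs :: "nat \<Rightarrow> nat list \<Rightarrow> nat" where
  "num_runs a t = card {i. i < length t \<and> t ! i = a \<and> (i = 0 \<or> t ! (i - 1) \<noteq> a)}"

end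

theory Submission
  imports Defs
begin

lemma move_Nil: "\<not> pell_move k [] v"
  by (auto simp: pell_move_def)

definition MC where "MC k x xs v \<longleftrightarrow> (\<exists>y ys. v = y#ys \<and> ((y = x \<and> pell_move k xs ys) \<or> (ys = xs \<and> x<k \<and> y<k \<and> (y=x+1 \<or> x=y+1)) \<or> (\<exists>zs. x=k-1 \<and> y=k \<and> xs = (k-1)#zs \<and> ys = k#zs) \<or> (\<exists>zs. x = k \<and> y = k-1 \<and> xs = k#zs \<and> ys = (k-1)#zs)))"

lemma move_Cons1: assumes "pell_move k (x#xs) v" shows "MC k x xs v"
proof -
  from assms consider (L) a b i j where "x # xs = a @ [i] @ b" "v = a @ [j] @ b" "i < k" "j < k" "j = i + 1 \<or> i = j + 1"
    | (U) a b where "x # xs = a @ [k - 1, k - 1] @ b" "v = a @ [k, k] @ b"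
    | (D) a b where "x # xs = a @ [k, k] @ b" "v = a @ [k - 1, k - 1] @ b"
    unfolding pell_move_def by blast
  then show ?thesis
  proof cases
  case L
  then obtain a b i j where h: "x # xs = a @ [i] @ b" "v = a @ [j] @ b" "i < k" "j < k" "j = i + 1 \<or> i = j + 1"
  by blast
  show "MC k x xs v"
  proof (cases a)
    case Nil then show ?thesis using h by (auto simp: MC_def)
  next
    case (Cons c a')
    then have "pell_move k xs (a' @ [j] @ b)" using h unfolding pell_move_def by auto
    then show ?thesis using h Cons by (auto simp: MC_def)
  qed
next
  case U then obtain a b where h: "x # xs = a @ [k - 1, k - 1] @ b" "v = a @ [k, k] @ b" by blast
  show "MC k x xs v"
  proof (cases a)
    case Nil then show ?thesis using h by (auto simp: MC_def)
  next
    case (Cons c a')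
    then have "pell_move k xs (a' @ [k,k] @ b)" using h unfolding pell_move_def by auto
    then show ?thesis using h Cons by (auto simp: MC_def)
  qed
next
  case D then obtain a b where h: "x # xs = a @ [k, k] @ b" "v = a @ [k - 1, k - 1] @ b" by blast
  show "MC k x xs v"
  proof (cases a)
    case Nil then show ?thesis using h by (auto simp: MC_def)
  next
    case (Cons c a')
    then have "pell_move k xs (a' @ [k-1,k-1] @ b)" using h unfolding pell_move_def by auto
    then show ?thesis using h Cons by (auto simp: MC_def)
  qed
qed
qed

lemma move_Cons2: assumes "MC k x xs v" shows "pell_move k (x#xs) v"
proof -
  from assms consider (S) ys where "v = x # ys" "pell_move k xs ys"
    | (L) y where "v = y # xs" "x < k" "y < k" "y = x + 1 \<or> x = y + 1"
    | (U) zs where "v = k # k # zs" "x = k - 1" "xs = (k-1)#zs"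
    | (D) zs where "v = (k-1) # (k-1) # zs" "x = k" "xs = k#zs"
    unfolding MC_def by blast
  then show ?thesis
  proof cases
    case S
    from S(2) consider (L) a b i j where "xs = a @ [i] @ b" "ys = a @ [j] @ b" "i < k" "j < k" "j = i + 1 \<or> i = j + 1"
      | (U) a b where "xs = a @ [k - 1, k - 1] @ b" "ys = a @ [k, k] @ b"
      | (D) a b where "xs = a @ [k, k] @ b" "ys = a @ [k - 1, k - 1] @ b"
      unfolding pell_move_def by blast
    then show ?thesis
    proof cases
      case L then show ?thesis unfolding pell_move_def using S
        by (intro disjI1 exI[of _ "x#a"] exI[of _ b] exI[of _ i] exI[of _ j]) auto
    next
      case U then show ?thesis unfolding pell_move_def using S
        by (intro disjI2 exI[of _ "x#a"] exI[of _ b] disjI1) auto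
    next
      case D then show ?thesis unfolding pell_move_def using S
        by (intro disjI2 exI[of _ "x#a"] exI[of _ b] disjI2) auto
    qed
  next
    case L then show ?thesis unfolding pell_move_def
      by (intro disjI1 exI[of _ "[]"] exI[of _ xs] exI[of _ x] exI[of _ y]) auto
  next
    case U then show ?thesis unfolding pell_move_def
      by (intro disjI2 exI[of _ "[]"] exI[of _ zs] disjI1) auto
  next
    case D then show ?thesis unfolding pell_move_def
      by (intro disjI2 exI[of _ "[]"] exI[of _ zs] disjI2) auto
  qed
qed

lemma move_Cons: "pell_move k (x#xs) v \<longleftrightarrow> MC k x xs v"
  using move_Cons1 move_Cons2 by blast


lemma runs_Nil: "num_runs a [] = 0" by (simp add: num_runs_def)

lemma runs_Cons: "real (num_runs a (x#xs)) = real (num_runs a xs) + (if x = a then 1 else 0)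
   - (if x = a \<and> xs \<noteq> [] \<and> hd xs = a then 1 else 0)"
proof -
  define S where "S t = {i. i < length t \<and> t ! i = a \<and> (i = 0 \<or> t ! (i - 1) \<noteq> a)}" for t
  have fin: "finite (S t)" for t unfolding S_def by simp
  define B where "B = S xs - (if x = a then {0} else {})"
  have eq: "S (x#xs) = (if x = a then {0} else {}) \<union> Suc ` B"
  proof (rule set_eqI)
    fix i show "i \<in> S (x#xs) \<longleftrightarrow> i \<in> (if x = a then {0} else {}) \<union> Suc ` B"
      by (cases i) (auto simp: S_def B_def nth_Cons' split: if_splits)
  qed
  have "card (S (x#xs)) = card (if x = a then {0::nat} else {}) + card (Suc ` B)"
    by (subst eq, rule card_Un_disjoint) (auto simp: B_def fin)
  moreover have "card (Suc ` B) = card B" by (simp add: card_image)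
  moreover have "0 \<in> S xs \<longleftrightarrow> xs \<noteq> [] \<and> hd xs = a" by (cases xs) (auto simp: S_def)
  moreover have "real (card B) = real (card (S xs)) - (if x = a \<and> 0 \<in> S xs then 1 else 0)"
  proof (cases "x = a \<and> 0 \<in> S xs")
    case True
    then have "card (S xs) \<ge> 1" using fin[of xs] by (metis One_nat_def Suc_leI card_gt_0_iff empty_iff)
    with True show ?thesis unfolding B_def using fin[of xs] by (simp add: card_Diff_singleton of_nat_diff)
  next
    case False then show ?thesis unfolding B_def by auto
  qed
  ultimately show ?thesis unfolding num_runs_def S_def[symmetric] by auto
qed


definition N where "N k t = {s. pell_word k s \<and> length s = length t \<and> pell_move k t s}"

lemma pw_set: "pell_word k s \<Longrightarrow> set s \<subseteq> {..k}"
  by (induction rule: pell_word.induct) auto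

lemma N_fin: "finite (N k t)"
proof -
  have "N k t \<subseteq> {s. set s \<subseteq> {..k} \<and> length s = length t}" unfolding N_def using pw_set by auto
  moreover have "finite {s. set s \<subseteq> {..k} \<and> length s = length t}"
    by (rule finite_lists_length_eq) simp
  ultimately show ?thesis by (rule finite_subset)
qed

lemma pw_lt: "x < k \<Longrightarrow> pell_word k (x#ys) \<longleftrightarrow> pell_word k ys"
  by (auto elim: pell_word.cases intro: pell_word.intros)

lemma pw_kk: "pell_word k (k#k#ys) \<longleftrightarrow> pell_word k ys"
  by (auto elim: pell_word.cases intro: pell_word.intros)

lemma pw_k_not: "y \<noteq> k \<Longrightarrow> \<not> pell_word k (k#y#ys)"
  by (auto elim: pell_word.cases)

lemma N_Nil: "N k [] = {}" by (simp add: N_def move_Nil)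

lemma N_letter:
  assumes "x < k" "pell_word k xs"
  shows "N k (x#xs) = Cons x ` N k xs \<union> (\<lambda>y. y#xs) ` {y. y<k \<and> (y=x+1 \<or> x=y+1)}
     \<union> (if x = k-1 \<and> xs \<noteq> [] \<and> hd xs = k-1 then {k#k#tl xs} else {})"
proof (rule set_eqI)
  fix s
  show "s \<in> N k (x#xs) \<longleftrightarrow> s \<in> Cons x ` N k xs \<union> (\<lambda>y. y#xs) ` {y. y<k \<and> (y=x+1 \<or> x=y+1)}
     \<union> (if x = k-1 \<and> xs \<noteq> [] \<and> hd xs = k-1 then {k#k#tl xs} else {})"
  proof
    assume "s \<in> N k (x#xs)"
    then have p: "pell_word k s" "length s = Suc (length xs)" "MC k x xs s" by (auto simp: N_def move_Cons)
    from p(3) consider (S) ys where "s = x # ys" "pell_move k xs ys"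
      | (L) y where "s = y # xs" "x < k" "y < k" "y = x + 1 \<or> x = y + 1"
      | (U) zs where "s = k # k # zs" "x = k - 1" "xs = (k-1)#zs"
      | (D) zs where "s = (k-1) # (k-1) # zs" "x = k" "xs = k#zs"
      unfolding MC_def by blast
    then show "s \<in> Cons x ` N k xs \<union> (\<lambda>y. y#xs) ` {y. y<k \<and> (y=x+1 \<or> x=y+1)}
     \<union> (if x = k-1 \<and> xs \<noteq> [] \<and> hd xs = k-1 then {k#k#tl xs} else {})"
    proof cases
      case S then show ?thesis using p assms by (auto simp: N_def pw_lt)
    next
      case L then show ?thesis by auto
    next
      case U then show ?thesis by auto
    next
      case D then show ?thesis using assms by auto
    qed
  next
    assume "s \<in> Cons x ` N k xs \<union> (\<lambda>y. y#xs) ` {y. y<k \<and> (y=x+1 \<or> x=y+1)}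
     \<union> (if x = k-1 \<and> xs \<noteq> [] \<and> hd xs = k-1 then {k#k#tl xs} else {})"
    then consider (S) ys where "s = x # ys" "ys \<in> N k xs"
      | (L) y where "s = y # xs" "y < k" "y = x + 1 \<or> x = y + 1"
      | (U) "x = k-1" "xs \<noteq> []" "hd xs = k-1" "s = k#k#tl xs"
      by (auto split: if_splits)
    then show "s \<in> N k (x#xs)"
    proof cases
      case S then show ?thesis using assms
        by (auto simp: N_def pw_lt move_Cons MC_def)
    next
      case L then show ?thesis using assms
        by (auto simp: N_def pw_lt move_Cons MC_def)
    next
      case U
      then obtain zs where zs: "xs = (k-1)#zs" by (cases xs) auto
      have "k - 1 < k" using assms by simp
      then have "pell_word k zs" using assms(2) zs pw_lt by blast
      then show ?thesis using U zs
        by (auto simp: N_def pw_kk move_Cons MC_def)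
    qed
  qed
qed

lemma N_block:
  assumes "k \<ge> 1" "pell_word k zs"
  shows "N k (k#k#zs) = (\<lambda>s. k#k#s) ` N k zs \<union> {(k-1)#(k-1)#zs}"
proof (rule set_eqI)
  fix s
  show "s \<in> N k (k#k#zs) \<longleftrightarrow> s \<in> (\<lambda>s. k#k#s) ` N k zs \<union> {(k-1)#(k-1)#zs}"
  proof
    assume "s \<in> N k (k#k#zs)"
    then have p: "pell_word k s" "length s = Suc (Suc (length zs))" "MC k k (k#zs) s" by (auto simp: N_def move_Cons)
    from p(3) consider (S) ys where "s = k # ys" "pell_move k (k#zs) ys"
      | (D) "s = (k-1) # (k-1) # zs"
      unfolding MC_def using assms by auto
    then show "s \<in> (\<lambda>s. k#k#s) ` N k zs \<union> {(k-1)#(k-1)#zs}"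
    proof cases
      case S
      from S(2) consider (S2) ws where "ys = k # ws" "pell_move k zs ws"
        | (D2) ws where "ys = (k-1) # (k-1) # ws"
        unfolding move_Cons MC_def using assms by auto
      then show ?thesis
      proof cases
        case S2 then show ?thesis using p S by (auto simp: N_def pw_kk)
      next
        case D2
        have "k - 1 \<noteq> k" using assms by simp
        then have False using p(1) S D2 pw_k_not by blast
        then show ?thesis ..
      qed
    next
      case D then show ?thesis by auto
    qed
  next
    assume "s \<in> (\<lambda>s. k#k#s) ` N k zs \<union> {(k-1)#(k-1)#zs}"
    then consider (S) ys where "s = k#k# ys" "ys \<in> N k zs"
      | (D) "s = (k-1)#(k-1)#zs"
      by auto
    then show "s \<in> N k (k#k#zs)"
    proof cases
      case S then show ?thesis
        by (auto simp: N_def pw_kk move_Cons MC_def)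
    next
      case D
      have "k - 1 < k" using assms by simp
      then show ?thesis using D assms
        by (auto simp: N_def pw_lt move_Cons MC_def)
    qed
  qed
qed


definition F :: "nat \<Rightarrow> nat list \<Rightarrow> real" where
  "F k t = real (count_list t 0) + 2 * (\<Sum>i=1..k-1. real (count_list t i))
           + real (count_list t k) / 2 - real (num_runs (k - 1) t)"

lemma sum_ind: fixes x k :: nat shows "(\<Sum>i=1..k-1. real (count_list (x#xs) i)) = (\<Sum>i=1..k-1. real (count_list xs i)) + (if 1 \<le> x \<and> x \<le> k - 1 then 1 else 0)"
proof -
  have "(\<Sum>i=1..k-1. real (count_list (x#xs) i)) = (\<Sum>i=1..k-1. real (count_list xs i) + (if x = i then 1 else 0))"
    by (rule sum.cong) auto
  also have "\<dots> = (\<Sum>i=1..k-1. real (count_list xs i)) + (\<Sum>i=1..k-1. (if x = i then 1 else 0))"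
    by (rule sum.distrib)
  also have "(\<Sum>i=1..k-1. (if x = i then 1 else 0)) = (if 1 \<le> x \<and> x \<le> k - 1 then 1 else (0::real))"
    by (subst sum.delta') auto
  finally show ?thesis .
qed

lemma card_Y:
  fixes x k :: nat
  assumes "x < k" "k \<ge> 3"
  shows "real (card {y. y<k \<and> (y=x+1 \<or> x=y+1)}) = (if x = 0 then 1 else if x = k - 1 then 1 else 2)"
proof -
  consider "x = 0" | "x = k - 1" | "x \<noteq> 0 \<and> x \<noteq> k - 1" by blast
  then show ?thesis
  proof cases
    case 1
    then have "{y. y<k \<and> (y=x+1 \<or> x=y+1)} = {1}" using assms by auto
    then show ?thesis using 1 by simp
  next
    case 2
    then have "{y. y<k \<and> (y=x+1 \<or> x=y+1)} = {k-2}" using assms by auto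
    then show ?thesis using 2 assms by simp
  next
    case 3
    then have "{y. y<k \<and> (y=x+1 \<or> x=y+1)} = {x-1, x+1}" using assms by auto
    then show ?thesis using 3 by simp
  qed
qed

lemma main:
  assumes "k \<ge> 3" "pell_word k t"
  shows "real (card (N k t)) = F k t"
  using assms(2)
proof (induction rule: pell_word.induct)
  case Nil then show ?case by (simp add: N_Nil F_def runs_Nil)
next
  case (Letter x xs)
  define Y where "Y = {y. y<k \<and> (y=x+1 \<or> x=y+1)}"
  define C where "C = (if x = k-1 \<and> xs \<noteq> [] \<and> hd xs = k-1 then {k#k#tl xs} else {})"
  have fY: "finite Y" unfolding Y_def by auto
  have eq: "N k (x#xs) = (Cons x ` N k xs \<union> (\<lambda>y. y#xs) ` Y) \<union> C"
    using N_letter[OF Letter(1,2)] unfolding Y_def C_def by simp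
  have d1: "Cons x ` N k xs \<inter> (\<lambda>y. y#xs) ` Y = {}" unfolding Y_def by auto
  have d2: "(Cons x ` N k xs \<union> (\<lambda>y. y#xs) ` Y) \<inter> C = {}" unfolding Y_def C_def using Letter(1) by auto
  have "card (N k (x#xs)) = card (Cons x ` N k xs) + card ((\<lambda>y. y#xs) ` Y) + card C"
    unfolding eq
    by (subst card_Un_disjoint[OF _ _ d2]) (auto simp: N_fin fY C_def card_Un_disjoint[OF _ _ d1])
  also have "card (Cons x ` N k xs) = card (N k xs)" by (simp add: card_image)
  also have "card ((\<lambda>y. y#xs) ` Y) = card Y" by (simp add: card_image inj_on_def)
  finally have c: "real (card (N k (x#xs))) = real (card (N k xs)) + real (card Y) + real (card C)" by simp
  have cC: "real (card C) = (if x = k-1 \<and> xs \<noteq> [] \<and> hd xs = k-1 then 1 else 0)" unfolding C_def by simp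
  have cY: "real (card Y) = (if x = 0 then 1 else if x = k - 1 then 1 else 2)"
    unfolding Y_def using card_Y Letter(1) assms(1) by blast
  have "F k (x#xs) = F k xs + (if x = 0 then 1 else 0) + 2 * (if 1 \<le> x \<and> x \<le> k - 1 then 1 else 0)
      - ((if x = k-1 then 1 else 0) - (if x = k-1 \<and> xs \<noteq> [] \<and> hd xs = k-1 then 1 else 0))"
    unfolding F_def sum_ind runs_Cons using Letter(1) by auto
  then show ?case using c cC cY Letter(3,1) assms(1)
    by (cases "x = 0"; cases "x = k - 1") auto
next
  case (Block zs)
  have d: "(\<lambda>s. k#k#s) ` N k zs \<inter> {(k-1)#(k-1)#zs} = {}" using assms(1) by auto
  have "card (N k (k#k#zs)) = card ((\<lambda>s. k#k#s) ` N k zs) + 1"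
    using N_block[OF _ Block(1)] assms(1) card_Un_disjoint[OF _ _ d] N_fin by simp
  also have "card ((\<lambda>s. k#k#s) ` N k zs) = card (N k zs)" by (simp add: card_image inj_on_def)
  finally have c: "real (card (N k (k#k#zs))) = real (card (N k zs)) + 1" by simp
  have "F k (k#k#zs) = F k zs + 1"
    unfolding F_def sum_ind runs_Cons using assms(1) by auto
  then show ?case using c Block(2) by simp
qed

theorem proposition5p4:
  fixes n k :: nat and t :: "nat list"
  assumes "n \<ge> 1" and "k \<ge> 3" and "t \<in> pell_vertices n k"
  shows "real (pell_degree n k t) =
           real (count_list t 0) + 2 * (\<Sum>i=1..k-1. real (count_list t i))
           + real (count_list t k) / 2 - real (num_runs (k - 1) t)"
proof -
  have "{s. pell_adj n k t s} = N k t"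
    using assms(3) by (auto simp: pell_adj_def pell_vertices_def N_def)
  then have "pell_degree n k t = card (N k t)" by (simp add: pell_degree_def)
  moreover have "pell_word k t" using assms(3) by (simp add: pell_vertices_def)
  ultimately show ?thesis using main[OF assms(2)] by (simp add: F_def)
qed
end
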